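(* Let $\mathcal V=\mathcal V_1\sqcup\mathcal V_{-1}$ be a finite set, $\mathcal E\subseteq\mathcal V_1\times\mathcal V_{-1}$, and $P:\mathcal V\to(0,\infty)$ with $p_v=P(\{v\})$. Then $\mathsf{OptProb}(\mathcal V_1,\mathcal V_{-1},\mathcal E,P)$ terminates and returns a pair $(q,z)$ in which $q$ is the (unique) minimizer of $$\min_{q\in\mathbb R^{\mathcal V}}\sum_{v\in\mathcal V}-p_v\log q_v\quad\text{s.t.}\quad q\ge\mathbf 0,\ Mq\le\mathbf 1,$$ where $M$ is the matrix associated with the bipartite graph $(\mathcal V_1,\mathcal V_{-1},\mathcal E)$.
   Context: For disjoint finite sets $\mathcal A,\mathcal B$, $\mathcal E\subseteq\mathcal A\times\mathcal B$, and weights $P:\mathcal A\cup\mathcal B\to[0,\infty)$ with $P(S)=\sum_{v\in S}P(\{v\})$: $E$ is the edge incidence matrix ($E_{e,w}=1$ if $w$ is an endpoint of $e$, else $0$) and $M=\begin{pmatrix}E\\ I\end{pmatrix}$ with rows indexed by $\mathcal E\sqcup(\mathcal A\cup\mathcal B)$. Define $r\in\mathbb R^{\mathcal A\cup\mathcal B}$: if $P(\mathcal A),P(\mathcal B)>0$, $r_v=P(\{v\})P(\mathcal A\cup\mathcal B)/P(\mathcal A)$ for $v\in\mathcal A$ and $r_v=P(\{v\})P(\mathcal A\cup\mathcal B)/P(\mathcal B)$ for $v\in\mathcal B$; otherwise $r_v=P(\{v\})$. $\mathsf{LinOpt}(\mathcal A,\mathcal B,\mathcal E,P)$ takes an optimal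 $y\in\{0,1\}^{\mathcal A\cup\mathcal B}$ of $\max r^{\top}y$ s.t. $y\ge\mathbf 0$, $My\le\mathbf 1$, and an optimal $z$ of the dual $\min\mathbf 1^{\top}z$ s.t. $z\ge\mathbf 0$, $M^{\top}z\ge r$, and returns $\mathcal A^+=\{v\in\mathcal A:y_v=1\}$, $\mathcal A^-=\mathcal A\setminus\mathcal A^+$, $\mathcal B^+=\{v\in\mathcal B:y_v=1\}$, $\mathcal B^-=\mathcal B\setminus\mathcal B^+$, and $z^{\mathrm{lin}}=z$. $\mathsf{OptProb}(\mathcal A,\mathcal B,\mathcal E,P)$ is the recursive procedure: compute $(\mathcal A^+,\mathcal A^-,\mathcal B^+,\mathcal B^-,z^{\mathrm{lin}})=\mathsf{LinOpt}(\mathcal A,\mathcal B,\mathcal E,P)$. If $P(\mathcal A^+)P(\mathcal B^+)>P(\mathcal A^-)P(\mathcal B^-)$: let $\mathcal E'=\mathcal E\cap(\mathcal A^+\times\mathcal B^-)$, $\mathcal E''=\mathcal E\cap(\mathcal A^-\times\mathcal B^+)$, $(q',z')=\mathsf{OptProb}(\mathcal A^+,\mathcal B^-,\mathcal E',P)$, $(q'',z'')=\mathsf{OptProb}(\mathcal A^-,\mathcal B^+,\mathcal E'',P)$; set $q_v=q'_v$ for $v\in\mathcal A^+\cup\mathcal B^-$ and $q_v=q''_v$ for $v\in\mathcal A^-\cup\mathcal B^+$; set $z_e=z'_e$ for $e\in\mathcal E'\cup\mathcal A^+\cup\mathcal B^-$, $z_e=z''_e$ for $e\in\mathcal E''\cup\mathcal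 A^-\cup\mathcal B^+$, and $z_e=0$ for other $e\in\mathcal E$. Otherwise: set $q_v=P(\mathcal A)/P(\mathcal A\cup\mathcal B)$ for $v\in\mathcal A$, $q_v=P(\mathcal B)/P(\mathcal A\cup\mathcal B)$ for $v\in\mathcal B$, and $z=z^{\mathrm{lin}}$. Return $(q,z)$. The claim holds for any choice of optimal solutions made by $\mathsf{LinOpt}$. *)

theory Defs
  imports Complex_Main "HOL-Library.Extended_Real"
begin

text \<open>The rows of M are indexed by the disjoint union E + (A \<union> B), rendered
  as the sum type ('a \<times> 'a) + 'a: Inl e for an edge row, Inr v for an identity row.\<close>

type_synonym 'a row = "('a \<times> 'a) + 'a"

definition rows :: "'a set \<Rightarrow> 'a set \<Rightarrow> ('a \<times> 'a) set \<Rightarrow> 'a row set" where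
  "rows A B E = Inl ` E \<union> Inr ` (A \<union> B)"

definition Mmat :: "'a row \<Rightarrow> 'a \<Rightarrow> real" where
  "Mmat r w = (case r of
      Inl e \<Rightarrow> (if w = fst e \<or> w = snd e then 1 else 0)
    | Inr u \<Rightarrow> (if w = u then 1 else 0))"

definition Mvec :: "'a set \<Rightarrow> 'a set \<Rightarrow> ('a \<Rightarrow> real) \<Rightarrow> 'a row \<Rightarrow> real" where
  "Mvec A B y r = (\<Sum>w\<in>A \<union> B. Mmat r w * y w)"

definition MTvec :: "'a set \<Rightarrow> 'a set \<Rightarrow> ('a \<times> 'a) set \<Rightarrow> ('a row \<Rightarrow> real) \<Rightarrow> 'a \<Rightarrow> real" where
  "MTvec A B E z w = (\<Sum>r\<in>rows A B E. Mmat r w * z r)"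

definition feasible :: "'a set \<Rightarrow> 'a set \<Rightarrow> ('a \<times> 'a) set \<Rightarrow> ('a \<Rightarrow> real) \<Rightarrow> bool" where
  "feasible A B E q \<longleftrightarrow> (\<forall>v\<in>A \<union> B. 0 \<le> q v) \<and> (\<forall>r\<in>rows A B E. Mvec A B q r \<le> 1)"

definition rvec :: "'a set \<Rightarrow> 'a set \<Rightarrow> ('a \<Rightarrow> real) \<Rightarrow> 'a \<Rightarrow> real" where
  "rvec A B P v =
     (if sum P A > 0 \<and> sum P B > 0 then
        (if v \<in> A then P v * sum P (A \<union> B) / sum P A else P v * sum P (A \<union> B) / sum P B)
      else P v)"

definition primal_opt :: "'a set \<Rightarrow> 'a set \<Rightarrow> ('a \<times> 'a) set \<Rightarrow> ('a \<Rightarrow> real) \<Rightarrow> ('a \<Rightarrow> real) \<Rightarrow> bool" where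
  "primal_opt A B E P y \<longleftrightarrow> feasible A B E y \<and>
     (\<forall>y'. feasible A B E y' \<longrightarrow>
        (\<Sum>v\<in>A \<union> B. rvec A B P v * y' v) \<le> (\<Sum>v\<in>A \<union> B. rvec A B P v * y v))"

definition dual_feasible :: "'a set \<Rightarrow> 'a set \<Rightarrow> ('a \<times> 'a) set \<Rightarrow> ('a \<Rightarrow> real) \<Rightarrow> ('a row \<Rightarrow> real) \<Rightarrow> bool" where
  "dual_feasible A B E P z \<longleftrightarrow> (\<forall>r\<in>rows A B E. 0 \<le> z r) \<and>
     (\<forall>w\<in>A \<union> B. MTvec A B E z w \<ge> rvec A B P w)"

definition dual_opt :: "'a set \<Rightarrow> 'a set \<Rightarrow> ('a \<times> 'a) set \<Rightarrow> ('a \<Rightarrow> real) \<Rightarrow> ('a row \<Rightarrow> real) \<Rightarrow> bool" where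
  "dual_opt A B E P z \<longleftrightarrow> dual_feasible A B E P z \<and>
     (\<forall>z'. dual_feasible A B E P z' \<longrightarrow> (\<Sum>r\<in>rows A B E. z r) \<le> (\<Sum>r\<in>rows A B E. z' r))"

text \<open>LinOpt as a relation: (Ap, Am, Bp, Bm, z) is a possible output, for some
  choice of an optimal 0/1 primal solution y and an optimal dual solution z.\<close>
definition LinOpt :: "'a set \<Rightarrow> 'a set \<Rightarrow> ('a \<times> 'a) set \<Rightarrow> ('a \<Rightarrow> real) \<Rightarrow>
    'a set \<Rightarrow> 'a set \<Rightarrow> 'a set \<Rightarrow> 'a set \<Rightarrow> ('a row \<Rightarrow> real) \<Rightarrow> bool" where
  "LinOpt A B E P Ap Am Bp Bm z \<longleftrightarrow>
     (\<exists>y. (\<forall>v\<in>A \<union> B. y v \<in> {0, 1}) \<and> primal_opt A B E P y \<and>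
          Ap = {v\<in>A. y v = 1} \<and> Am = A - Ap \<and> Bp = {v\<in>B. y v = 1} \<and> Bm = B - Bp) \<and>
     dual_opt A B E P z"

text \<open>OptProb as a (nondeterministic) relation between inputs and possible outputs.
  Outside their index sets, outputs are set to 0 (irrelevant convention).\<close>
inductive OptProb :: "'a set \<Rightarrow> 'a set \<Rightarrow> ('a \<times> 'a) set \<Rightarrow> ('a \<Rightarrow> real) \<Rightarrow>
    ('a \<Rightarrow> real) \<Rightarrow> ('a row \<Rightarrow> real) \<Rightarrow> bool" where
  split:
  "\<lbrakk> LinOpt A B E P Ap Am Bp Bm zl;
     sum P Ap * sum P Bp > sum P Am * sum P Bm;
     OptProb Ap Bm (E \<inter> (Ap \<times> Bm)) P q' z';
     OptProb Am Bp (E \<inter> (Am \<times> Bp)) P q'' z'' \<rbrakk> \<Longrightarrow>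
   OptProb A B E P
     (\<lambda>v. if v \<in> Ap \<union> Bm then q' v else if v \<in> Am \<union> Bp then q'' v else 0)
     (\<lambda>e. if e \<in> Inl ` (E \<inter> (Ap \<times> Bm)) \<union> Inr ` (Ap \<union> Bm) then z' e
          else if e \<in> Inl ` (E \<inter> (Am \<times> Bp)) \<union> Inr ` (Am \<union> Bp) then z'' e
          else 0)"
| stop:
  "\<lbrakk> LinOpt A B E P Ap Am Bp Bm zl;
     \<not> (sum P Ap * sum P Bp > sum P Am * sum P Bm) \<rbrakk> \<Longrightarrow>
   OptProb A B E P
     (\<lambda>v. if v \<in> A then sum P A / sum P (A \<union> B)
          else if v \<in> B then sum P B / sum P (A \<union> B) else 0)
     zl"

definition OptProb_call :: "('a \<Rightarrow> real) \<Rightarrow>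
    ('a set \<times> 'a set \<times> ('a \<times> 'a) set) \<Rightarrow> ('a set \<times> 'a set \<times> ('a \<times> 'a) set) \<Rightarrow> bool" where
  "OptProb_call P x' x \<longleftrightarrow> (case x of (A, B, E) \<Rightarrow>
     (\<exists>Ap Am Bp Bm zl. LinOpt A B E P Ap Am Bp Bm zl \<and>
        sum P Ap * sum P Bp > sum P Am * sum P Bm \<and>
        (x' = (Ap, Bm, E \<inter> (Ap \<times> Bm)) \<or> x' = (Am, Bp, E \<inter> (Am \<times> Bp)))))"

text \<open>Termination for every choice: no infinite chain of recursive calls starting at x.\<close>
definition OptProb_terminates :: "('a \<Rightarrow> real) \<Rightarrow> 'a set \<Rightarrow> 'a set \<Rightarrow> ('a \<times> 'a) set \<Rightarrow> bool" where
  "OptProb_terminates P A B E \<longleftrightarrow> (A, B, E) \<in> Wellfounded.acc {(x', x). OptProb_call P x' x}"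

text \<open>Objective \<Sum> - p_v log q_v, with value +\<infinity> if some q_v \<le> 0 (p_v > 0).\<close>
definition neg_loglik :: "'a set \<Rightarrow> ('a \<Rightarrow> real) \<Rightarrow> ('a \<Rightarrow> real) \<Rightarrow> ereal" where
  "neg_loglik V P q = (\<Sum>v\<in>V. if q v > 0 then ereal (- P v * ln (q v)) else \<infinity>)"

definition is_unique_minimizer :: "'a set \<Rightarrow> 'a set \<Rightarrow> ('a \<times> 'a) set \<Rightarrow> ('a \<Rightarrow> real) \<Rightarrow> ('a \<Rightarrow> real) \<Rightarrow> bool" where
  "is_unique_minimizer A B E P q \<longleftrightarrow> feasible A B E q \<and>
     (\<forall>q'. feasible A B E q' \<longrightarrow> neg_loglik (A \<union> B) P q \<le> neg_loglik (A \<union> B) P q') \<and>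
     (\<forall>q'. feasible A B E q' \<and> neg_loglik (A \<union> B) P q' \<le> neg_loglik (A \<union> B) P q \<longrightarrow>
          (\<forall>v\<in>A \<union> B. q' v = q v))"

end

theory Submission
  imports Defs "HOL-Analysis.Analysis"
begin


lemma Mvec_Inl:
  assumes "finite (A \<union> B)" "a \<in> A \<union> B" "b \<in> A \<union> B" "a \<noteq> b"
  shows "Mvec A B q (Inl (a,b)) = q a + q b"
proof -
  have "Mvec A B q (Inl (a,b)) = (\<Sum>w\<in>A \<union> B. (if w = a then q w else 0) + (if w = b then q w else 0))"
    unfolding Mvec_def Mmat_def using assms(4) by (intro sum.cong) auto
  also have "\<dots> = q a + q b" using assms by (simp add: sum.distrib)
  finally show ?thesis .
qed

lemma Mvec_Inr:
  assumes "finite (A \<union> B)" "v \<in> A \<union> B"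
  shows "Mvec A B q (Inr v) = q v"
proof -
  have "Mvec A B q (Inr v) = (\<Sum>w\<in>A \<union> B. (if w = v then q w else 0))"
    unfolding Mvec_def Mmat_def by (intro sum.cong) auto
  also have "\<dots> = q v" using assms by simp
  finally show ?thesis .
qed

lemma feasible_iff:
  assumes "finite A" "finite B" "A \<inter> B = {}" "E \<subseteq> A \<times> B"
  shows "feasible A B E q \<longleftrightarrow> (\<forall>v\<in>A \<union> B. 0 \<le> q v \<and> q v \<le> 1) \<and> (\<forall>(a,b)\<in>E. q a + q b \<le> 1)"
proof -
  have fin: "finite (A \<union> B)" using assms by auto
  have e: "Mvec A B q (Inl (a,b)) = q a + q b" if "(a,b) \<in> E" for a b
    using that assms by (intro Mvec_Inl[OF fin]) auto
  have i: "Mvec A B q (Inr v) = q v" if "v \<in> A \<union> B" for v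
    using that by (intro Mvec_Inr[OF fin])
  have "(\<forall>r\<in>Defs.rows A B E. Mvec A B q r \<le> 1) \<longleftrightarrow> (\<forall>(a,b)\<in>E. q a + q b \<le> 1) \<and> (\<forall>v\<in>A \<union> B. q v \<le> 1)"
  proof
    assume h: "\<forall>r\<in>Defs.rows A B E. Mvec A B q r \<le> 1"
    have "q a + q b \<le> 1" if "(a,b) \<in> E" for a b
      using h[rule_format, of "Inl (a,b)"] e[OF that] that unfolding Defs.rows_def by auto
    moreover have "q v \<le> 1" if "v \<in> A \<union> B" for v
      using h[rule_format, of "Inr v"] i[OF that] that unfolding Defs.rows_def by auto
    ultimately show "(\<forall>(a,b)\<in>E. q a + q b \<le> 1) \<and> (\<forall>v\<in>A \<union> B. q v \<le> 1)" by auto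
  next
    assume h: "(\<forall>(a,b)\<in>E. q a + q b \<le> 1) \<and> (\<forall>v\<in>A \<union> B. q v \<le> 1)"
    show "\<forall>r\<in>Defs.rows A B E. Mvec A B q r \<le> 1"
    proof
      fix r assume "r \<in> Defs.rows A B E"
      then consider (l) a b where "r = Inl (a,b)" "(a,b) \<in> E" | (v) v where "r = Inr v" "v \<in> A \<union> B"
        unfolding Defs.rows_def by auto
      then show "Mvec A B q r \<le> 1"
      proof cases
        case l then show ?thesis using e h by auto
      next
        case v then show ?thesis using i h by auto
      qed
    qed
  qed
  then show ?thesis unfolding feasible_def by auto
qed





lemma NL_eq:
  assumes "finite V"
  shows "neg_loglik V P q = (if \<forall>v\<in>V. q v > 0 then ereal (\<Sum>v\<in>V. - P v * ln (q v)) else \<infinity>)"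
  using assms unfolding neg_loglik_def
proof (induction V rule: finite_induct)
  case empty then show ?case by simp
next
  case (insert x F)
  have "(\<Sum>v\<in>insert x F. if 0 < q v then ereal (- P v * ln (q v)) else \<infinity>) =
     (if 0 < q x then ereal (- P x * ln (q x)) else \<infinity>) + (\<Sum>v\<in>F. if 0 < q v then ereal (- P v * ln (q v)) else \<infinity>)"
    using insert by (simp add: sum.insert)
  also have "\<dots> = (if 0 < q x then ereal (- P x * ln (q x)) else \<infinity>) + (if \<forall>v\<in>F. q v > 0 then ereal (\<Sum>v\<in>F. - P v * ln (q v)) else \<infinity>)"
    using insert(3) by simp
  also have "\<dots> = (if \<forall>v\<in>insert x F. q v > 0 then ereal (\<Sum>v\<in>insert x F. - P v * ln (q v)) else \<infinity>)"
    using insert(1,2) by (simp add: sum.insert)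
  finally show ?case .
qed




definition wfin :: "'a set \<Rightarrow> 'a set \<Rightarrow> ('a \<times> 'a) set \<Rightarrow> ('a \<Rightarrow> real) \<Rightarrow> bool" where
  "wfin A B E P \<longleftrightarrow> finite A \<and> finite B \<and> A \<inter> B = {} \<and> E \<subseteq> A \<times> B \<and> (\<forall>v\<in>A \<union> B. P v > 0)"

definition indep :: "('a \<times> 'a) set \<Rightarrow> 'a set \<Rightarrow> bool" where
  "indep E U \<longleftrightarrow> (\<forall>(a,b)\<in>E. \<not> (a \<in> U \<and> b \<in> U))"

lemma sum_pos_iff:
  assumes "finite S" "\<forall>v\<in>S. P v > (0::real)"
  shows "sum P S > 0 \<longleftrightarrow> S \<noteq> {}"
  using assms by (metis less_irrefl sum.empty sum_pos)

lemma sum_nonneg_P: "\<forall>v\<in>S. P v > (0::real) \<Longrightarrow> sum P S \<ge> 0"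
  by (simp add: less_imp_le sum_nonneg)

lemma indicator_feasible:
  assumes "wfin A B E P" "U \<subseteq> A \<union> B" "indep E U"
  shows "feasible A B E (\<lambda>v. if v \<in> U then 1 else 0)"
  using assms unfolding wfin_def indep_def by (subst feasible_iff) auto

lemma LinOpt_facts:
  assumes wfin: "wfin A B E P" and L: "LinOpt A B E P Ap Am Bp Bm zl"
  shows "Ap \<subseteq> A" "Am = A - Ap" "Bp \<subseteq> B" "Bm = B - Bp"
    "\<forall>(a,b)\<in>E. \<not> (a \<in> Ap \<and> b \<in> Bp)"
    "\<forall>q'. feasible A B E q' \<longrightarrow> (\<Sum>v\<in>A \<union> B. rvec A B P v * q' v) \<le> sum (rvec A B P) (Ap \<union> Bp)"
    "\<forall>U. U \<subseteq> A \<union> B \<and> indep E U \<longrightarrow> sum (rvec A B P) U \<le> sum (rvec A B P) (Ap \<union> Bp)"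
proof -
  obtain y where y01: "\<forall>v\<in>A \<union> B. y v \<in> {0, 1}" and po: "primal_opt A B E P y"
    and Ap: "Ap = {v\<in>A. y v = 1}" and Am: "Am = A - Ap" and Bp: "Bp = {v\<in>B. y v = 1}" and Bm: "Bm = B - Bp"
    using L unfolding LinOpt_def by blast
  have fin: "finite A" "finite B" "A \<inter> B = {}" "E \<subseteq> A \<times> B" using wfin unfolding wfin_def by auto
  show "Ap \<subseteq> A" "Am = A - Ap" "Bp \<subseteq> B" "Bm = B - Bp" using Ap Am Bp Bm by auto
  have feas: "feasible A B E y" using po unfolding primal_opt_def by auto
  then have fy: "\<forall>(a,b)\<in>E. y a + y b \<le> 1" using feasible_iff[OF fin] by auto
  show "\<forall>(a,b)\<in>E. \<not> (a \<in> Ap \<and> b \<in> Bp)" using fy Ap Bp by fastforce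
  have ABy: "Ap \<union> Bp = {v\<in>A \<union> B. y v = 1}" using Ap Bp by auto
  have sy: "(\<Sum>v\<in>A \<union> B. rvec A B P v * y v) = sum (rvec A B P) (Ap \<union> Bp)"
  proof -
    have "(\<Sum>v\<in>A \<union> B. rvec A B P v * y v) = (\<Sum>v\<in>A \<union> B. if y v = 1 then rvec A B P v else 0)"
      using y01 by (intro sum.cong) auto
    also have "\<dots> = sum (rvec A B P) {v\<in>A \<union> B. y v = 1}"
      using fin by (simp add: sum.If_cases Int_def)
    finally show ?thesis using ABy by simp
  qed
  show opt: "\<forall>q'. feasible A B E q' \<longrightarrow> (\<Sum>v\<in>A \<union> B. rvec A B P v * q' v) \<le> sum (rvec A B P) (Ap \<union> Bp)"
    using po sy unfolding primal_opt_def by auto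
  show "\<forall>U. U \<subseteq> A \<union> B \<and> indep E U \<longrightarrow> sum (rvec A B P) U \<le> sum (rvec A B P) (Ap \<union> Bp)"
  proof (intro allI impI)
    fix U assume U: "U \<subseteq> A \<union> B \<and> indep E U"
    have "(\<Sum>v\<in>A \<union> B. rvec A B P v * (if v \<in> U then 1 else 0)) = sum (rvec A B P) U"
    proof -
      have "(\<Sum>v\<in>A \<union> B. rvec A B P v * (if v \<in> U then 1 else 0)) = (\<Sum>v\<in>A \<union> B. if v \<in> U then rvec A B P v else 0)"
        by (intro sum.cong) auto
      also have "\<dots> = sum (rvec A B P) ((A \<union> B) \<inter> U)" using fin by (simp add: sum.If_cases)
      finally show ?thesis using U by (simp add: Int_absorb1)
    qed
    then show "sum (rvec A B P) U \<le> sum (rvec A B P) (Ap \<union> Bp)"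
      using opt indicator_feasible[OF wfin] U by metis
  qed
qed




definition LL :: "'a set \<Rightarrow> ('a \<Rightarrow> real) \<Rightarrow> ('a \<Rightarrow> real) \<Rightarrow> real" where
  "LL V P q = (\<Sum>v\<in>V. P v * ln (q v))"

definition pos :: "'a set \<Rightarrow> ('a \<Rightarrow> real) \<Rightarrow> bool" where
  "pos V q \<longleftrightarrow> (\<forall>v\<in>V. q v > 0)"

lemma NL_LL: "finite V \<Longrightarrow> neg_loglik V P q = (if pos V q then ereal (- LL V P q) else \<infinity>)"
  unfolding NL_eq pos_def LL_def by (simp add: sum_negf)

lemma umin_intro:
  assumes wfin: "wfin A B E P" and f: "feasible A B E q" and p: "pos (A \<union> B) q"
    and opt: "\<And>q'. feasible A B E q' \<Longrightarrow> pos (A \<union> B) q' \<Longrightarrow> LL (A \<union> B) P q' \<le> LL (A \<union> B) P q"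
    and uni: "\<And>q'. feasible A B E q' \<Longrightarrow> pos (A \<union> B) q' \<Longrightarrow> LL (A \<union> B) P q \<le> LL (A \<union> B) P q' \<Longrightarrow> \<forall>v\<in>A \<union> B. q' v = q v"
  shows "is_unique_minimizer A B E P q"
proof -
  have fin: "finite (A \<union> B)" using wfin unfolding wfin_def by auto
  have a: "neg_loglik (A \<union> B) P q \<le> neg_loglik (A \<union> B) P q'" if "feasible A B E q'" for q'
    using opt[OF that] p unfolding NL_LL[OF fin] by auto
  have b: "\<forall>v\<in>A \<union> B. q' v = q v" if "feasible A B E q'" "neg_loglik (A \<union> B) P q' \<le> neg_loglik (A \<union> B) P q" for q'
  proof -
    have "pos (A \<union> B) q'" using that(2) p unfolding NL_LL[OF fin] by (auto split: if_splits)
    moreover then have "LL (A \<union> B) P q \<le> LL (A \<union> B) P q'" using that(2) p unfolding NL_LL[OF fin] by auto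
    ultimately show ?thesis using uni that(1) by blast
  qed
  show ?thesis unfolding is_unique_minimizer_def using a b f by blast
qed

lemma half_feasible:
  assumes wfin: "wfin A B E P"
  shows "feasible A B E (\<lambda>v. 1/2)"
proof -
  have fin: "finite A" "finite B" "A \<inter> B = {}" "E \<subseteq> A \<times> B" using wfin unfolding wfin_def by auto
  show ?thesis unfolding feasible_iff[OF fin] by auto
qed

lemma umin_dest:
  assumes wfin: "wfin A B E P" and u: "is_unique_minimizer A B E P q"
  shows "feasible A B E q" "pos (A \<union> B) q"
    "\<And>q'. feasible A B E q' \<Longrightarrow> pos (A \<union> B) q' \<Longrightarrow> LL (A \<union> B) P q' \<le> LL (A \<union> B) P q"
    "\<And>q'. feasible A B E q' \<Longrightarrow> pos (A \<union> B) q' \<Longrightarrow> LL (A \<union> B) P q \<le> LL (A \<union> B) P q' \<Longrightarrow> \<forall>v\<in>A \<union> B. q' v = q v"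
proof -
  have fin: "finite (A \<union> B)" using wfin unfolding wfin_def by auto
  note u' = u[unfolded is_unique_minimizer_def NL_LL[OF fin]]
  show "feasible A B E q" using u' by auto
  have "pos (A \<union> B) (\<lambda>v. 1/2)" unfolding pos_def by auto
  moreover have "neg_loglik (A \<union> B) P q \<le> neg_loglik (A \<union> B) P (\<lambda>v. 1/2)"
    using u half_feasible[OF wfin] unfolding is_unique_minimizer_def by blast
  ultimately show pq: "pos (A \<union> B) q" unfolding NL_LL[OF fin] by (auto split: if_splits)
  show "\<And>q'. feasible A B E q' \<Longrightarrow> pos (A \<union> B) q' \<Longrightarrow> LL (A \<union> B) P q' \<le> LL (A \<union> B) P q"
  proof -
    fix q' assume "feasible A B E q'" "pos (A \<union> B) q'"
    with u' pq have "ereal (- LL (A \<union> B) P q) \<le> ereal (- LL (A \<union> B) P q')" by auto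
    then show "LL (A \<union> B) P q' \<le> LL (A \<union> B) P q" by simp
  qed
  show "\<And>q'. feasible A B E q' \<Longrightarrow> pos (A \<union> B) q' \<Longrightarrow> LL (A \<union> B) P q \<le> LL (A \<union> B) P q' \<Longrightarrow> \<forall>v\<in>A \<union> B. q' v = q v"
  proof -
    fix q' assume h: "feasible A B E q'" "pos (A \<union> B) q'" "LL (A \<union> B) P q \<le> LL (A \<union> B) P q'"
    have "neg_loglik (A \<union> B) P q' \<le> neg_loglik (A \<union> B) P q"
      using h pq unfolding NL_LL[OF fin] by auto
    then show "\<forall>v\<in>A \<union> B. q' v = q v" using u h(1) unfolding is_unique_minimizer_def by blast
  qed
qed

lemma ln_eq_minus_one:
  fixes x :: real assumes "x > 0" "ln x \<ge> x - 1" shows "x = 1"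
proof (rule ccontr)
  assume ne: "x \<noteq> 1"
  have s: "sqrt x > 0" using assms by simp
  have "ln (sqrt x) \<le> sqrt x - 1" by (rule ln_le_minus_one[OF s])
  moreover have "ln (sqrt x) = ln x / 2" using assms by (simp add: ln_sqrt)
  ultimately have "ln x \<le> 2 * sqrt x - 2" by simp
  moreover have "sqrt x \<noteq> 1" using ne assms by auto
  then have "(sqrt x - 1)^2 > 0" by simp
  then have "2 * sqrt x - 2 < x - 1" using assms by (simp add: power2_eq_square algebra_simps)
  ultimately show False using assms by simp
qed




definition NA :: "('a \<times> 'a) set \<Rightarrow> 'a set \<Rightarrow> 'a set" where
  "NA E S = {b. \<exists>a\<in>S. (a,b) \<in> E}"
definition NB :: "('a \<times> 'a) set \<Rightarrow> 'a set \<Rightarrow> 'a set" where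
  "NB E T = {a. \<exists>b\<in>T. (a,b) \<in> E}"

definition InvA :: "'a set \<Rightarrow> 'a set \<Rightarrow> ('a \<times> 'a) set \<Rightarrow> ('a \<Rightarrow> real) \<Rightarrow> ('a \<Rightarrow> real) \<Rightarrow> bool" where
  "InvA A B E P q \<longleftrightarrow> (\<forall>\<theta>. 0 \<le> \<theta> \<longrightarrow> \<theta> \<le> 1 \<longrightarrow> (\<forall>S\<subseteq>A. (1-\<theta>) * sum P S \<le> \<theta> * sum P (NA E S)) \<longrightarrow> (\<forall>a\<in>A. q a \<le> \<theta>))"
definition InvB :: "'a set \<Rightarrow> 'a set \<Rightarrow> ('a \<times> 'a) set \<Rightarrow> ('a \<Rightarrow> real) \<Rightarrow> ('a \<Rightarrow> real) \<Rightarrow> bool" where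
  "InvB A B E P q \<longleftrightarrow> (\<forall>\<theta>. 0 \<le> \<theta> \<longrightarrow> \<theta> \<le> 1 \<longrightarrow> (\<forall>T\<subseteq>B. (1-\<theta>) * sum P T \<le> \<theta> * sum P (NB E T)) \<longrightarrow> (\<forall>b\<in>B. q b \<le> \<theta>))"

lemma NA_sub: "E \<subseteq> A \<times> B \<Longrightarrow> NA E S \<subseteq> B" unfolding NA_def by auto
lemma NB_sub: "E \<subseteq> A \<times> B \<Longrightarrow> NB E T \<subseteq> A" unfolding NB_def by auto

lemma sum_mono_P: "finite B \<Longrightarrow> X \<subseteq> B \<Longrightarrow> \<forall>v\<in>B. P v > (0::real) \<Longrightarrow> sum P X \<le> sum P B"
  by (rule sum_mono2) auto

lemma stop_case:
  assumes wfin: "wfin A B E P" and L: "LinOpt A B E P Ap Am Bp Bm zl"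
    and ns: "\<not> (sum P Ap * sum P Bp > sum P Am * sum P Bm)"
    and qdef: "q = (\<lambda>v. if v \<in> A then sum P A / sum P (A \<union> B) else if v \<in> B then sum P B / sum P (A \<union> B) else 0)"
  shows "is_unique_minimizer A B E P q \<and> InvA A B E P q \<and> InvB A B E P q"
proof -
  have fA: "finite A" and fB: "finite B" and dj: "A \<inter> B = {}" and EAB: "E \<subseteq> A \<times> B"
    and Ppos: "\<forall>v\<in>A \<union> B. P v > 0" using wfin unfolding wfin_def by auto
  note LF = LinOpt_facts[OF wfin L]
  define PA where "PA = sum P A"
  define PB where "PB = sum P B"
  define PV where "PV = sum P (A \<union> B)"
  have PV: "PV = PA + PB" unfolding PV_def PA_def PB_def using fA fB dj by (simp add: sum.union_disjoint)
  have PA0: "PA \<ge> 0" "PB \<ge> 0" unfolding PA_def PB_def using Ppos by (auto intro: sum_nonneg less_imp_le)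
  have PAp: "A \<noteq> {} \<Longrightarrow> PA > 0" unfolding PA_def using Ppos fA by (intro sum_pos) auto
  have PBp: "B \<noteq> {} \<Longrightarrow> PB > 0" unfolding PB_def using Ppos fB by (intro sum_pos) auto
  have PAz: "A = {} \<Longrightarrow> PA = 0" "B = {} \<Longrightarrow> PB = 0" unfolding PA_def PB_def by auto
  have qA: "v \<in> A \<Longrightarrow> q v = PA / PV" and qB: "v \<in> B \<Longrightarrow> q v = PB / PV" for v
    using dj unfolding qdef PA_def PB_def PV_def by auto
  have key: "q v > 0 \<and> rvec A B P v * q v = P v" if v: "v \<in> A \<union> B" for v
  proof (cases "PA > 0 \<and> PB > 0")
    case True
    then have r: "rvec A B P v = (if v \<in> A then P v * PV / PA else P v * PV / PB)"
      unfolding rvec_def PA_def PB_def PV_def by auto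
    show ?thesis using True v qA qB r PV dj by auto
  next
    case False
    then have r: "rvec A B P v = P v" unfolding rvec_def PA_def PB_def by auto
    show ?thesis
    proof (cases "v \<in> A")
      case True
      then have "PA > 0" using PAp by auto
      then have "PB = 0" using False PA0 by auto
      then show ?thesis using True qA r PV \<open>PA > 0\<close> by auto
    next
      case f: False
      then have "v \<in> B" using v by auto
      then have "PB > 0" using PBp by auto
      then have "PA = 0" using False PA0 by auto
      then show ?thesis using \<open>v \<in> B\<close> qB r PV \<open>PB > 0\<close> by auto
    qed
  qed
  have srv: "sum (rvec A B P) (Ap \<union> Bp) \<le> PV"
  proof (cases "PA > 0 \<and> PB > 0")
    case True
    have dApBp: "Ap \<inter> Bp = {}" using LF(1,3) dj by auto
    have fAp: "finite Ap" "finite Bp" using LF(1,3) fA fB finite_subset by auto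
    have "sum (rvec A B P) (Ap \<union> Bp) = sum (rvec A B P) Ap + sum (rvec A B P) Bp"
      using dApBp fAp by (simp add: sum.union_disjoint)
    also have "sum (rvec A B P) Ap = sum P Ap * PV / PA"
      using True LF(1) unfolding rvec_def PA_def PB_def PV_def by (auto simp: sum_divide_distrib sum_distrib_right intro!: sum.cong)
    also have "sum (rvec A B P) Bp = sum P Bp * PV / PB"
    proof -
      have "v \<notin> A" if "v \<in> Bp" for v using that LF(3) dj by auto
      then have "sum (rvec A B P) Bp = (\<Sum>v\<in>Bp. P v * PV / PB)"
        using True unfolding rvec_def PA_def PB_def PV_def by (intro sum.cong) auto
      then show ?thesis by (simp add: sum_divide_distrib sum_distrib_right)
    qed
    finally have e: "sum (rvec A B P) (Ap \<union> Bp) = sum P Ap * PV / PA + sum P Bp * PV / PB" .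
    have PAs: "PA = sum P Ap + sum P Am" unfolding PA_def LF(2) using LF(1) fA by (metis add.commute sum.subset_diff)
    have PBs: "PB = sum P Bp + sum P Bm" unfolding PB_def LF(4) using LF(3) fB by (metis add.commute sum.subset_diff)
    have nn: "sum P Ap \<ge> 0" "sum P Am \<ge> 0" "sum P Bp \<ge> 0" "sum P Bm \<ge> 0"
    proof -
      have Pnn: "\<forall>v\<in>A \<union> B. P v \<ge> 0" using Ppos by (simp add: less_imp_le)
      show "sum P Ap \<ge> 0" "sum P Am \<ge> 0" "sum P Bp \<ge> 0" "sum P Bm \<ge> 0"
        using Pnn LF(1-4) by (auto intro!: sum_nonneg)
    qed
    have "sum P Ap * PB + sum P Bp * PA \<le> PA * PB"
      using ns PAs PBs by (simp add: algebra_simps)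
    then have "sum P Ap / PA + sum P Bp / PB \<le> 1" using True by (simp add: field_simps)
    then have "PV * (sum P Ap / PA + sum P Bp / PB) \<le> PV" using PV PA0 by (simp add: mult_left_le)
    then show ?thesis unfolding e by (simp add: algebra_simps)
  next
    case False
    then have "rvec A B P v = P v" for v unfolding rvec_def PA_def PB_def by auto
    moreover have "sum P (Ap \<union> Bp) \<le> sum P (A \<union> B)"
      using LF(1,3) fA fB Ppos by (intro sum_mono_P) auto
    ultimately show ?thesis unfolding PV_def by simp
  qed
  have fin: "finite (A \<union> B)" using fA fB by auto
  have feasq: "feasible A B E q"
    unfolding feasible_iff[OF fA fB dj EAB]
  proof (intro conjI ballI)
    fix v assume v: "v \<in> A \<union> B"
    show "0 \<le> q v" using key[OF v] by simp
    show "q v \<le> 1"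
    proof (cases "v \<in> A")
      case True then show ?thesis using qA PV PA0 by (simp add: divide_le_eq_1, linarith)
    next
      case False then show ?thesis using qB PV PA0 v by (simp add: divide_le_eq_1, linarith)
    qed
  next
    fix e assume e: "e \<in> E"
    obtain a b where ab: "e = (a,b)" by fastforce
    have "a \<in> A" "b \<in> B" using e ab EAB by auto
    then have "PV > 0" using PAp PV PA0 by fastforce
    then show "case e of (a,b) \<Rightarrow> q a + q b \<le> 1" using ab qA qB \<open>a \<in> A\<close> \<open>b \<in> B\<close> PV
      by (simp add: add_divide_distrib[symmetric])
  qed
  have posq: "pos (A \<union> B) q" using key unfolding pos_def by auto
  have tang: "P v * ln (q' v) \<le> P v * ln (q v) + rvec A B P v * q' v - P v"
    if v: "v \<in> A \<union> B" and qp: "q' v > 0" for v q'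
  proof -
    have k: "q v > 0" "rvec A B P v * q v = P v" using key[OF v] by auto
    have "ln (q' v / q v) \<le> q' v / q v - 1" using qp k by (intro ln_le_minus_one) simp
    then have "ln (q' v) - ln (q v) \<le> q' v / q v - 1" using qp k by (simp add: ln_div)
    then have "P v * (ln (q' v) - ln (q v)) \<le> P v * (q' v / q v - 1)"
      using Ppos v by (intro mult_left_mono) (auto simp: less_imp_le)
    moreover have "P v * (q' v / q v - 1) = rvec A B P v * q' v - P v"
      using k by (simp add: field_simps flip: k(2))
    ultimately show ?thesis by (simp add: algebra_simps)
  qed
  have sumrv: "sum P (A \<union> B) = PV" unfolding PV_def ..
  have opt: "LL (A \<union> B) P q' \<le> LL (A \<union> B) P q + ((\<Sum>v\<in>A \<union> B. rvec A B P v * q' v) - PV)"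
    if "pos (A \<union> B) q'" for q'
  proof -
    have "LL (A \<union> B) P q' \<le> (\<Sum>v\<in>A \<union> B. P v * ln (q v) + rvec A B P v * q' v - P v)"
      unfolding LL_def using tang that unfolding pos_def by (intro sum_mono) auto
    also have "\<dots> = LL (A \<union> B) P q + ((\<Sum>v\<in>A \<union> B. rvec A B P v * q' v) - PV)"
      unfolding LL_def PV_def by (simp add: sum.distrib sum_subtractf)
    finally show ?thesis .
  qed
  have um: "is_unique_minimizer A B E P q"
  proof (rule umin_intro[OF wfin feasq posq])
    fix q' assume f': "feasible A B E q'" and p': "pos (A \<union> B) q'"
    have "(\<Sum>v\<in>A \<union> B. rvec A B P v * q' v) \<le> PV" using LF(6) f' srv by fastforce
    then show "LL (A \<union> B) P q' \<le> LL (A \<union> B) P q" using opt[OF p'] by simp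
  next
    fix q' assume f': "feasible A B E q'" and p': "pos (A \<union> B) q'"
      and le: "LL (A \<union> B) P q \<le> LL (A \<union> B) P q'"
    have s1: "(\<Sum>v\<in>A \<union> B. rvec A B P v * q' v) \<le> PV" using LF(6) f' srv by fastforce
    define d where "d v = P v * ln (q v) + rvec A B P v * q' v - P v - P v * ln (q' v)" for v
    have dn: "\<forall>v\<in>A \<union> B. 0 \<le> d v" using tang p' unfolding d_def pos_def by fastforce
    have "sum d (A \<union> B) = LL (A \<union> B) P q + ((\<Sum>v\<in>A \<union> B. rvec A B P v * q' v) - PV) - LL (A \<union> B) P q'"
      unfolding d_def LL_def PV_def by (simp add: sum.distrib sum_subtractf)
    then have "sum d (A \<union> B) \<le> 0" using s1 le by simp
    then have d0: "\<forall>v\<in>A \<union> B. d v = 0" using dn fin sum_nonneg_eq_0_iff[OF fin]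
      by (metis antisym sum_nonneg)
    show "\<forall>v\<in>A \<union> B. q' v = q v"
    proof
      fix v assume v: "v \<in> A \<union> B"
      have k: "q v > 0" "rvec A B P v * q v = P v" using key[OF v] by auto
      have qp: "q' v > 0" using p' v unfolding pos_def by auto
      have Pv: "P v > 0" using Ppos v by auto
      have r: "rvec A B P v = P v / q v" using k by (simp add: field_simps)
      have "P v * (ln (q' v) - ln (q v)) = rvec A B P v * q' v - P v"
        using d0 v unfolding d_def by (simp add: algebra_simps)
      also have "\<dots> = P v * (q' v / q v - 1)" using k(1) unfolding r by (simp add: field_simps)
      finally have "P v * (ln (q' v) - ln (q v)) = P v * (q' v / q v - 1)" .
      then have "ln (q' v) - ln (q v) = q' v / q v - 1" using Pv by simp
      then have "ln (q' v / q v) \<ge> q' v / q v - 1" using qp k by (simp add: ln_div)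
      then have "q' v / q v = 1" using qp k by (intro ln_eq_minus_one) auto
      then show "q' v = q v" using k by simp
    qed
  qed
  have iA: "InvA A B E P q" unfolding InvA_def
  proof (intro allI impI ballI)
    fix \<theta> :: real and a assume t: "0 \<le> \<theta>" "\<theta> \<le> 1" and H: "\<forall>S\<subseteq>A. (1 - \<theta>) * sum P S \<le> \<theta> * sum P (NA E S)"
      and a: "a \<in> A"
    have "(1-\<theta>) * PA \<le> \<theta> * sum P (NA E A)" using H unfolding PA_def by auto
    also have "\<dots> \<le> \<theta> * PB" unfolding PB_def using t NA_sub[OF EAB] fB Ppos
      by (intro mult_left_mono sum_mono_P) auto
    finally have "PA \<le> \<theta> * PV" using PV by (simp add: algebra_simps)
    moreover have "PV > 0" using PAp a PV PA0 by fastforce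
    ultimately show "q a \<le> \<theta>" using qA[OF a] by (simp add: divide_le_eq mult.commute)
  qed
  have iB: "InvB A B E P q" unfolding InvB_def
  proof (intro allI impI ballI)
    fix \<theta> :: real and b assume t: "0 \<le> \<theta>" "\<theta> \<le> 1" and H: "\<forall>T\<subseteq>B. (1 - \<theta>) * sum P T \<le> \<theta> * sum P (NB E T)"
      and b: "b \<in> B"
    have "(1-\<theta>) * PB \<le> \<theta> * sum P (NB E B)" using H unfolding PB_def by auto
    also have "\<dots> \<le> \<theta> * PA" unfolding PA_def using t NB_sub[OF EAB] fA Ppos
      by (intro mult_left_mono sum_mono_P) auto
    finally have "PB \<le> \<theta> * PV" using PV by (simp add: algebra_simps)
    moreover have "PV > 0" using PBp b PV PA0 by fastforce
    ultimately show "q b \<le> \<theta>" using qB[OF b] by (simp add: divide_le_eq mult.commute)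
  qed
  show ?thesis using um iA iB by blast
qed




lemma wf_sub:
  assumes wfin: "wfin A B E P" and L: "LinOpt A B E P Ap Am Bp Bm zl"
  shows "wfin Ap Bm (E \<inter> (Ap \<times> Bm)) P" "wfin Am Bp (E \<inter> (Am \<times> Bp)) P"
  using LinOpt_facts(1-4)[OF wfin L] wfin unfolding wfin_def by (auto intro: finite_subset)

lemma split_case:
  assumes wfin: "wfin A B E P" and L: "LinOpt A B E P Ap Am Bp Bm zl"
    and sp: "sum P Ap * sum P Bp > sum P Am * sum P Bm"
    and E1: "E1 = E \<inter> (Ap \<times> Bm)" and E2: "E2 = E \<inter> (Am \<times> Bp)"
    and IH1: "is_unique_minimizer Ap Bm E1 P q1 \<and> InvA Ap Bm E1 P q1 \<and> InvB Ap Bm E1 P q1"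
    and IH2: "is_unique_minimizer Am Bp E2 P q2 \<and> InvA Am Bp E2 P q2 \<and> InvB Am Bp E2 P q2"
    and qdef: "q = (\<lambda>v. if v \<in> Ap \<union> Bm then q1 v else if v \<in> Am \<union> Bp then q2 v else 0)"
  shows "is_unique_minimizer A B E P q \<and> InvA A B E P q \<and> InvB A B E P q"
proof -
  have fA: "finite A" and fB: "finite B" and dj: "A \<inter> B = {}" and EAB: "E \<subseteq> A \<times> B"
    and Ppos: "\<forall>v\<in>A \<union> B. P v > 0" using wfin unfolding wfin_def by auto
  have Pnn: "\<forall>v\<in>A \<union> B. P v \<ge> 0" using Ppos by (simp add: less_imp_le)
  note LF = LinOpt_facts[OF wfin L]
  have wf1: "wfin Ap Bm E1 P" and wf2: "wfin Am Bp E2 P" using wf_sub[OF wfin L] E1 E2 by auto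
  have fAp: "finite Ap" "finite Am" "finite Bp" "finite Bm" using LF(1-4) fA fB by (auto intro: finite_subset)
  have djs: "Ap \<inter> Am = {}" "Bp \<inter> Bm = {}" "A = Ap \<union> Am" "B = Bp \<union> Bm" using LF(1-4) by auto
  define PA where "PA = sum P A"
  define PB where "PB = sum P B"
  define PV where "PV = sum P (A \<union> B)"
  have PV: "PV = PA + PB" unfolding PV_def PA_def PB_def using fA fB dj by (simp add: sum.union_disjoint)
  have nn: "sum P Am * sum P Bm \<ge> 0" using Pnn LF(1-4) by (auto intro!: sum_nonneg mult_nonneg_nonneg)
  then have "sum P Ap \<noteq> 0" "sum P Bp \<noteq> 0" using sp by auto
  then have "Ap \<noteq> {}" "Bp \<noteq> {}" by auto
  then have PAp: "PA > 0" and PBp: "PB > 0" unfolding PA_def PB_def using Ppos fA fB LF(1,3)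
    by (auto intro!: sum_pos)
  have PVp: "PV > 0" using PV PAp PBp by simp
  have rA: "rvec A B P v = P v * PV / PA" if "v \<in> A" for v
    using that PAp PBp unfolding rvec_def PA_def PB_def PV_def by auto
  have rB: "rvec A B P v = P v * PV / PB" if "v \<in> B" for v
    using that PAp PBp dj unfolding rvec_def PA_def PB_def PV_def by auto
  have rsA: "sum (rvec A B P) S = sum P S * PV / PA" if "S \<subseteq> A" for S
  proof -
    have "sum (rvec A B P) S = (\<Sum>v\<in>S. P v * PV / PA)" using that rA by (intro sum.cong) auto
    then show ?thesis by (simp add: sum_divide_distrib sum_distrib_right)
  qed
  have rsB: "sum (rvec A B P) S = sum P S * PV / PB" if "S \<subseteq> B" for S
  proof -
    have "sum (rvec A B P) S = (\<Sum>v\<in>S. P v * PV / PB)" using that rB by (intro sum.cong) auto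
    then show ?thesis by (simp add: sum_divide_distrib sum_distrib_right)
  qed
  have fin: "finite (A \<union> B)" using fA fB by auto
  have swapA: "sum P S * PB \<le> sum P (NA E2 S) * PA" if S: "S \<subseteq> Am" for S
  proof -
    define T where "T = NA E S \<inter> Bp"
    have T2: "NA E2 S = T" unfolding T_def NA_def E2 using S by auto
    define U where "U = ((Ap \<union> Bp) - T) \<union> S"
    have TB: "T \<subseteq> Bp" unfolding T_def by auto
    have SA: "S \<subseteq> A" using S LF(2) by auto
    have U1: "U \<subseteq> A \<union> B" unfolding U_def using LF(1,3) SA by auto
    have U2: "indep E U" unfolding indep_def
    proof (clarify)
      fix a b assume e: "(a,b) \<in> E" and a: "a \<in> U" and b: "b \<in> U"
      have aA: "a \<in> A" "b \<in> B" using e EAB by auto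
      have "b \<notin> S" using S aA(2) dj LF(2) by auto
      then have b': "b \<in> Bp" "b \<notin> T" using b aA(1) aA(2) dj LF(1) unfolding U_def by auto
      have "a \<notin> Bp" using aA(1) LF(3) dj by auto
      then have "a \<in> Ap \<or> a \<in> S" using a unfolding U_def by auto
      then show False
      proof
        assume "a \<in> Ap" then show False using LF(5) e b' by auto
      next
        assume "a \<in> S" then have "b \<in> T" using e b' unfolding T_def NA_def by auto
        then show False using b' by auto
      qed
    qed
    have le: "sum (rvec A B P) U \<le> sum (rvec A B P) (Ap \<union> Bp)" using LF(7) U1 U2 by blast
    have dSU: "((Ap \<union> Bp) - T) \<inter> S = {}" using S LF(2) LF(3) dj by auto
    have fU: "finite (Ap \<union> Bp)" "finite S" "finite T" using fAp S TB by (auto intro: finite_subset)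
    have "sum (rvec A B P) U = sum (rvec A B P) ((Ap \<union> Bp) - T) + sum (rvec A B P) S"
      unfolding U_def using dSU fU by (simp add: sum.union_disjoint)
    also have "sum (rvec A B P) ((Ap \<union> Bp) - T) = sum (rvec A B P) (Ap \<union> Bp) - sum (rvec A B P) T"
      using TB fU by (subst sum_diff) auto
    finally have "sum (rvec A B P) S \<le> sum (rvec A B P) T" using le by simp
    moreover have "TBB": "T \<subseteq> B" using TB LF(3) by auto
    ultimately have "sum P S * PV / PA \<le> sum P T * PV / PB" using rsA[OF SA] rsB[OF TBB] by simp
    then have "PV * (sum P S * PB) \<le> PV * (sum P T * PA)" using PAp PBp by (simp add: field_simps)
    then show ?thesis unfolding T2 using PVp by (simp add: mult_le_cancel_left_pos)
  qed
  have swapB: "sum P T * PA \<le> sum P (NB E1 T) * PB" if T: "T \<subseteq> Bm" for T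
  proof -
    define S where "S = NB E T \<inter> Ap"
    have S1: "NB E1 T = S" unfolding S_def NB_def E1 using T by auto
    define U where "U = ((Ap \<union> Bp) - S) \<union> T"
    have SA: "S \<subseteq> Ap" unfolding S_def by auto
    have TB: "T \<subseteq> B" using T LF(4) by auto
    have U1: "U \<subseteq> A \<union> B" unfolding U_def using LF(1,3) TB by auto
    have U2: "indep E U" unfolding indep_def
    proof (clarify)
      fix a b assume e: "(a,b) \<in> E" and a: "a \<in> U" and b: "b \<in> U"
      have aA: "a \<in> A" "b \<in> B" using e EAB by auto
      have "a \<notin> T" using T aA(1) dj LF(4) by auto
      then have a': "a \<in> Ap" "a \<notin> S" using a aA(1) aA(2) dj LF(3) unfolding U_def by auto
      have "b \<notin> Ap" using aA(2) LF(1) dj by auto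
      then have "b \<in> Bp \<or> b \<in> T" using b unfolding U_def by auto
      then show False
      proof
        assume "b \<in> Bp" then show False using LF(5) e a' by auto
      next
        assume "b \<in> T" then have "a \<in> S" using e a' unfolding S_def NB_def by auto
        then show False using a' by auto
      qed
    qed
    have le: "sum (rvec A B P) U \<le> sum (rvec A B P) (Ap \<union> Bp)" using LF(7) U1 U2 by blast
    have dSU: "((Ap \<union> Bp) - S) \<inter> T = {}" using T LF(1) LF(4) dj by auto
    have fU: "finite (Ap \<union> Bp)" "finite S" "finite T" using fAp T SA by (auto intro: finite_subset)
    have "sum (rvec A B P) U = sum (rvec A B P) ((Ap \<union> Bp) - S) + sum (rvec A B P) T"
      unfolding U_def using dSU fU by (simp add: sum.union_disjoint)
    also have "sum (rvec A B P) ((Ap \<union> Bp) - S) = sum (rvec A B P) (Ap \<union> Bp) - sum (rvec A B P) S"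
      using SA fU by (subst sum_diff) auto
    finally have "sum (rvec A B P) T \<le> sum (rvec A B P) S" using le by simp
    moreover have SAA: "S \<subseteq> A" using SA LF(1) by auto
    ultimately have "sum P T * PV / PB \<le> sum P S * PV / PA" using rsA[OF SAA] rsB[OF TB] by simp
    then have "PV * (sum P T * PA) \<le> PV * (sum P S * PB)" using PAp PBp by (simp add: field_simps)
    then show ?thesis unfolding S1 using PVp by (simp add: mult_le_cancel_left_pos)
  qed

  note U1 = umin_dest[OF wf1 conjunct1[OF IH1]]
  note U2 = umin_dest[OF wf2 conjunct1[OF IH2]]
  have IA1: "InvA Ap Bm E1 P q1" "InvB Ap Bm E1 P q1" using IH1 by auto
  have IA2: "InvA Am Bp E2 P q2" "InvB Am Bp E2 P q2" using IH2 by auto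
  have fw1: "finite Ap" "finite Bm" "Ap \<inter> Bm = {}" "E1 \<subseteq> Ap \<times> Bm" using wf1 unfolding wfin_def by auto
  have fw2: "finite Am" "finite Bp" "Am \<inter> Bp = {}" "E2 \<subseteq> Am \<times> Bp" using wf2 unfolding wfin_def by auto
  note F0 = feasible_iff[OF fA fB dj EAB]
  note F1 = feasible_iff[OF fw1]
  note F2 = feasible_iff[OF fw2]
  have q1e: "q v = q1 v" if "v \<in> Ap \<union> Bm" for v using that qdef by auto
  have q2e: "q v = q2 v" if "v \<in> Am \<union> Bp" for v using that qdef djs dj by auto
  have parts: "A \<union> B = (Ap \<union> Bm) \<union> (Am \<union> Bp)" "(Ap \<union> Bm) \<inter> (Am \<union> Bp) = {}"
    using djs dj by auto
  have finp: "finite (Ap \<union> Bm)" "finite (Am \<union> Bp)" using fAp by auto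
  have LLsplit: "LL (A \<union> B) P f = LL (Ap \<union> Bm) P f + LL (Am \<union> Bp) P f" for f
    unfolding LL_def parts(1) using parts(2) finp by (simp add: sum.union_disjoint)
  have crossA: "q2 a \<le> PA / PV" if a: "a \<in> Am" for a
  proof -
    have h: "\<forall>S\<subseteq>Am. (1 - PA/PV) * sum P S \<le> PA/PV * sum P (NA E2 S)"
    proof (intro allI impI)
      fix S assume S: "S \<subseteq> Am"
      have "1 - PA/PV = PB/PV" using PV PVp by (simp add: field_simps)
      moreover have "sum P S * PB / PV \<le> sum P (NA E2 S) * PA / PV"
        using swapA[OF S] PVp by (simp add: divide_right_mono)
      moreover have "PB/PV * sum P S = sum P S * PB / PV" "PA/PV * sum P (NA E2 S) = sum P (NA E2 S) * PA / PV" by simp_all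
      ultimately show "(1 - PA/PV) * sum P S \<le> PA/PV * sum P (NA E2 S)" by (simp only:)
    qed
    have "0 \<le> PA/PV" "PA/PV \<le> 1" using PAp PBp PV by (auto simp: field_simps)
    then show ?thesis using IA2(1) h a unfolding InvA_def by blast
  qed
  have crossB: "q1 b \<le> PB / PV" if b: "b \<in> Bm" for b
  proof -
    have h: "\<forall>T\<subseteq>Bm. (1 - PB/PV) * sum P T \<le> PB/PV * sum P (NB E1 T)"
    proof (intro allI impI)
      fix T assume T: "T \<subseteq> Bm"
      have "1 - PB/PV = PA/PV" using PV PVp by (simp add: field_simps)
      moreover have "sum P T * PA / PV \<le> sum P (NB E1 T) * PB / PV"
        using swapB[OF T] PVp by (simp add: divide_right_mono)
      moreover have "PA/PV * sum P T = sum P T * PA / PV" "PB/PV * sum P (NB E1 T) = sum P (NB E1 T) * PB / PV" by simp_all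
      ultimately show "(1 - PB/PV) * sum P T \<le> PB/PV * sum P (NB E1 T)" by (simp only:)
    qed
    have "0 \<le> PB/PV" "PB/PV \<le> 1" using PAp PBp PV by (auto simp: field_simps)
    then show ?thesis using IA1(2) h b unfolding InvB_def by blast
  qed
  have fq1: "\<forall>v\<in>A \<union> B. 0 \<le> q v \<and> q v \<le> 1"
  proof
    fix v assume v: "v \<in> A \<union> B"
    then consider "v \<in> Ap \<union> Bm" | "v \<in> Am \<union> Bp" using parts by auto
    then show "0 \<le> q v \<and> q v \<le> 1"
    proof cases
      case 1 then show ?thesis using U1(1) q1e unfolding F1 by auto
    next
      case 2 then show ?thesis using U2(1) q2e unfolding F2 by auto
    qed
  qed
  have fq2: "\<forall>e\<in>E. case e of (a, b) \<Rightarrow> q a + q b \<le> 1"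
  proof
    fix e assume e: "e \<in> E"
    obtain a b where ab: "e = (a,b)" by fastforce
    have aA: "a \<in> A" "b \<in> B" using e ab EAB by auto
    have "q a + q b \<le> 1"
    proof (cases "a \<in> Ap")
      case True
      then have "b \<notin> Bp" using LF(5) e ab by auto
      then have "b \<in> Bm" using aA LF(4) by auto
      then have "(a,b) \<in> E1" using e ab True E1 by auto
      then show ?thesis using U1(1) q1e True \<open>b \<in> Bm\<close> unfolding F1 by fastforce
    next
      case False
      then have am: "a \<in> Am" using aA LF(2) by auto
      show ?thesis
      proof (cases "b \<in> Bp")
        case True
        then have "(a,b) \<in> E2" using e ab am E2 by auto
        then show ?thesis using U2(1) q2e True am unfolding F2 by fastforce
      next
        case False
        then have bm: "b \<in> Bm" using aA LF(4) by auto
        have "q a + q b \<le> PA/PV + PB/PV" using crossA[OF am] crossB[OF bm] q1e q2e am bm by auto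
        also have "\<dots> = 1" using PV PVp by (simp add: add_divide_distrib[symmetric])
        finally show ?thesis .
      qed
    qed
    then show "case e of (a, b) \<Rightarrow> q a + q b \<le> 1" using ab by simp
  qed
  have feasq: "feasible A B E q" unfolding F0 using fq1 fq2 by blast
  have posq: "pos (A \<union> B) q" using U1(2) U2(2) q1e q2e parts unfolding pos_def by auto
  have LLq: "LL (A \<union> B) P q = LL (Ap \<union> Bm) P q1 + LL (Am \<union> Bp) P q2"
  proof -
    have "LL (Ap \<union> Bm) P q = LL (Ap \<union> Bm) P q1" unfolding LL_def using q1e by (intro sum.cong) auto
    moreover have "LL (Am \<union> Bp) P q = LL (Am \<union> Bp) P q2" unfolding LL_def using q2e by (intro sum.cong) auto
    ultimately show ?thesis using LLsplit[of q] by simp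
  qed
  have restr: "feasible Ap Bm E1 q' \<and> feasible Am Bp E2 q' \<and> pos (Ap \<union> Bm) q' \<and> pos (Am \<union> Bp) q'"
    if f: "feasible A B E q'" and p: "pos (A \<union> B) q'" for q'
  proof -
    have f0: "(\<forall>v\<in>A \<union> B. 0 \<le> q' v \<and> q' v \<le> 1) \<and> (\<forall>(a, b)\<in>E. q' a + q' b \<le> 1)" using f unfolding F0 .
    have s1: "Ap \<union> Bm \<subseteq> A \<union> B" "Am \<union> Bp \<subseteq> A \<union> B" "E1 \<subseteq> E" "E2 \<subseteq> E" using LF(1-4) E1 E2 by auto
    have "feasible Ap Bm E1 q'" unfolding F1 using f0 s1 by (meson in_mono)
    moreover have "feasible Am Bp E2 q'" unfolding F2 using f0 s1 by (meson in_mono)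
    moreover have "pos (Ap \<union> Bm) q'" "pos (Am \<union> Bp) q'" using p parts unfolding pos_def by auto
    ultimately show ?thesis by blast
  qed
  have um: "is_unique_minimizer A B E P q"
  proof (rule umin_intro[OF wfin feasq posq])
    fix q' assume f': "feasible A B E q'" and p': "pos (A \<union> B) q'"
    note r = restr[OF f' p']
    have "LL (Ap \<union> Bm) P q' \<le> LL (Ap \<union> Bm) P q1" using U1(3) r by blast
    moreover have "LL (Am \<union> Bp) P q' \<le> LL (Am \<union> Bp) P q2" using U2(3) r by blast
    ultimately show "LL (A \<union> B) P q' \<le> LL (A \<union> B) P q" unfolding LLq LLsplit[of q'] by simp
  next
    fix q' assume f': "feasible A B E q'" and p': "pos (A \<union> B) q'"
      and le: "LL (A \<union> B) P q \<le> LL (A \<union> B) P q'"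
    note r = restr[OF f' p']
    have a1: "LL (Ap \<union> Bm) P q' \<le> LL (Ap \<union> Bm) P q1" using U1(3) r by blast
    have a2: "LL (Am \<union> Bp) P q' \<le> LL (Am \<union> Bp) P q2" using U2(3) r by blast
    have b1: "LL (Ap \<union> Bm) P q1 \<le> LL (Ap \<union> Bm) P q'" using le a2 unfolding LLq LLsplit[of q'] by simp
    have b2: "LL (Am \<union> Bp) P q2 \<le> LL (Am \<union> Bp) P q'" using le a1 unfolding LLq LLsplit[of q'] by simp
    have c1: "\<forall>v\<in>Ap \<union> Bm. q' v = q1 v" using U1(4) r b1 by blast
    have c2: "\<forall>v\<in>Am \<union> Bp. q' v = q2 v" using U2(4) r b2 by blast
    show "\<forall>v\<in>A \<union> B. q' v = q v" using c1 c2 q1e q2e parts by auto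
  qed
  have iA: "InvA A B E P q" unfolding InvA_def
  proof (intro allI impI ballI)
    fix \<theta> :: real and a assume t: "0 \<le> \<theta>" "\<theta> \<le> 1" and H: "\<forall>S\<subseteq>A. (1 - \<theta>) * sum P S \<le> \<theta> * sum P (NA E S)"
      and a: "a \<in> A"
    show "q a \<le> \<theta>"
    proof (cases "a \<in> Ap")
      case True
      have h: "\<forall>S\<subseteq>Ap. (1 - \<theta>) * sum P S \<le> \<theta> * sum P (NA E1 S)"
      proof (intro allI impI)
        fix S assume S: "S \<subseteq> Ap"
        have "NA E S \<subseteq> NA E1 S"
        proof
          fix b assume "b \<in> NA E S"
          then obtain a where ab: "a \<in> S" "(a,b) \<in> E" unfolding NA_def by blast
          then have "b \<in> B" "a \<in> Ap" using EAB S by auto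
          moreover have "b \<notin> Bp" using LF(5) ab \<open>a \<in> Ap\<close> by blast
          ultimately have "(a,b) \<in> E1" using ab E1 LF(4) by blast
          then show "b \<in> NA E1 S" using ab unfolding NA_def by blast
        qed
        moreover have "NA E1 S \<subseteq> Bm" using NA_sub[OF fw1(4)] .
        ultimately have "sum P (NA E S) \<le> sum P (NA E1 S)"
          using fAp(4) Pnn LF(4) by (intro sum_mono2) (auto intro: finite_subset)
        then have "\<theta> * sum P (NA E S) \<le> \<theta> * sum P (NA E1 S)" using t by (intro mult_left_mono)
        moreover have "S \<subseteq> A" using S LF(1) by blast
        then have "(1-\<theta>) * sum P S \<le> \<theta> * sum P (NA E S)" using H by blast
        ultimately show "(1 - \<theta>) * sum P S \<le> \<theta> * sum P (NA E1 S)" by linarith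
      qed
      then have "q1 a \<le> \<theta>" using IA1(1) t True unfolding InvA_def by blast
      then show ?thesis using q1e True by auto
    next
      case False
      then have am: "a \<in> Am" using a LF(2) by auto
      have hA: "(1 - \<theta>) * PA \<le> \<theta> * PB"
      proof -
        have "(1-\<theta>) * PA \<le> \<theta> * sum P (NA E A)" using H unfolding PA_def by auto
        also have "\<dots> \<le> \<theta> * PB" unfolding PB_def using t NA_sub[OF EAB] fB Ppos
          by (intro mult_left_mono sum_mono_P) auto
        finally show ?thesis .
      qed
      have h: "\<forall>S\<subseteq>Am. (1 - \<theta>) * sum P S \<le> \<theta> * sum P (NA E2 S)"
      proof (intro allI impI)
        fix S assume S: "S \<subseteq> Am"
        have sw: "sum P S * PB \<le> sum P (NA E2 S) * PA" using swapA[OF S] .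
        have T0: "sum P (NA E2 S) \<ge> 0" using NA_sub[OF fw2(4)] Pnn LF(3) by (intro sum_nonneg) auto
        have "(1-\<theta>) * (sum P S * PB) \<le> (1-\<theta>) * (sum P (NA E2 S) * PA)" using sw t by (intro mult_left_mono) auto
        also have "\<dots> = sum P (NA E2 S) * ((1-\<theta>) * PA)" by simp
        also have "\<dots> \<le> sum P (NA E2 S) * (\<theta> * PB)" using hA T0 by (intro mult_left_mono)
        finally have "PB * ((1-\<theta>) * sum P S) \<le> PB * (\<theta> * sum P (NA E2 S))" by (simp add: algebra_simps)
        then show "(1 - \<theta>) * sum P S \<le> \<theta> * sum P (NA E2 S)" using PBp by (simp add: mult_le_cancel_left_pos)
      qed
      then have "q2 a \<le> \<theta>" using IA2(1) t am unfolding InvA_def by blast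
      then show ?thesis using q2e am by auto
    qed
  qed
  have iB: "InvB A B E P q" unfolding InvB_def
  proof (intro allI impI ballI)
    fix \<theta> :: real and b assume t: "0 \<le> \<theta>" "\<theta> \<le> 1" and H: "\<forall>T\<subseteq>B. (1 - \<theta>) * sum P T \<le> \<theta> * sum P (NB E T)"
      and b: "b \<in> B"
    show "q b \<le> \<theta>"
    proof (cases "b \<in> Bp")
      case True
      have h: "\<forall>T\<subseteq>Bp. (1 - \<theta>) * sum P T \<le> \<theta> * sum P (NB E2 T)"
      proof (intro allI impI)
        fix T assume T: "T \<subseteq> Bp"
        have "NB E T \<subseteq> NB E2 T"
        proof
          fix a assume "a \<in> NB E T"
          then obtain b where ab: "b \<in> T" "(a,b) \<in> E" unfolding NB_def by blast
          then have "a \<in> A" "b \<in> Bp" using EAB T by auto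
          moreover have "a \<notin> Ap" using LF(5) ab \<open>b \<in> Bp\<close> by blast
          ultimately have "(a,b) \<in> E2" using ab E2 LF(2) by blast
          then show "a \<in> NB E2 T" using ab unfolding NB_def by blast
        qed
        moreover have "NB E2 T \<subseteq> Am" using NB_sub[OF fw2(4)] .
        ultimately have "sum P (NB E T) \<le> sum P (NB E2 T)"
          using fAp(2) Pnn LF(2) by (intro sum_mono2) (auto intro: finite_subset)
        then have "\<theta> * sum P (NB E T) \<le> \<theta> * sum P (NB E2 T)" using t by (intro mult_left_mono)
        moreover have "T \<subseteq> B" using T LF(3) by blast
        then have "(1-\<theta>) * sum P T \<le> \<theta> * sum P (NB E T)" using H by blast
        ultimately show "(1 - \<theta>) * sum P T \<le> \<theta> * sum P (NB E2 T)" by linarith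
      qed
      then have "q2 b \<le> \<theta>" using IA2(2) t True unfolding InvB_def by blast
      then show ?thesis using q2e True by auto
    next
      case False
      then have bm: "b \<in> Bm" using b LF(4) by auto
      have hB: "(1 - \<theta>) * PB \<le> \<theta> * PA"
      proof -
        have "(1-\<theta>) * PB \<le> \<theta> * sum P (NB E B)" using H unfolding PB_def by auto
        also have "\<dots> \<le> \<theta> * PA" unfolding PA_def using t NB_sub[OF EAB] fA Ppos
          by (intro mult_left_mono sum_mono_P) auto
        finally show ?thesis .
      qed
      have h: "\<forall>T\<subseteq>Bm. (1 - \<theta>) * sum P T \<le> \<theta> * sum P (NB E1 T)"
      proof (intro allI impI)
        fix T assume T: "T \<subseteq> Bm"
        have sw: "sum P T * PA \<le> sum P (NB E1 T) * PB" using swapB[OF T] .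
        have T0: "sum P (NB E1 T) \<ge> 0" using NB_sub[OF fw1(4)] Pnn LF(1) by (intro sum_nonneg) auto
        have "(1-\<theta>) * (sum P T * PA) \<le> (1-\<theta>) * (sum P (NB E1 T) * PB)" using sw t by (intro mult_left_mono) auto
        also have "\<dots> = sum P (NB E1 T) * ((1-\<theta>) * PB)" by simp
        also have "\<dots> \<le> sum P (NB E1 T) * (\<theta> * PA)" using hB T0 by (intro mult_left_mono)
        finally have "PA * ((1-\<theta>) * sum P T) \<le> PA * (\<theta> * sum P (NB E1 T))" by (simp add: algebra_simps)
        then show "(1 - \<theta>) * sum P T \<le> \<theta> * sum P (NB E1 T)" using PAp by (simp add: mult_le_cancel_left_pos)
      qed
      then have "q1 b \<le> \<theta>" using IA1(2) t bm unfolding InvB_def by blast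
      then show ?thesis using q1e bm by auto
    qed
  qed
  show ?thesis using um iA iB by blast
qed



lemma step_int:
  fixes lo hi k :: real
  assumes "0 \<le> lo" "lo \<le> hi" "hi \<le> 1"
  shows "((\<lambda>t. if t \<in> {lo..hi} then k else 0) has_integral k * (hi - lo)) {0..1}"
proof -
  have "((\<lambda>t. k) has_integral k * (hi - lo)) {lo..hi}"
    using has_integral_const_real[of k lo hi] assms by (simp add: mult.commute)
  then show ?thesis using assms by (subst has_integral_restrict) auto
qed

lemma stepA_int:
  fixes c k :: real
  assumes "0 \<le> c" "c \<le> 1"
  shows "((\<lambda>t. k * (if t < c then 1 else 0)) has_integral k * c) {0..1}"
proof -
  have "((\<lambda>t. if t \<in> {0..c} then k else 0) has_integral k * (c - 0)) {0..1}"
    using step_int[of 0 c k] assms by blast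
  then show ?thesis
    by (subst has_integral_spike_finite_eq[of "{c}", where g="\<lambda>t. if t \<in> {0..c} then k else 0"]) auto
qed

lemma stepB_int:
  fixes c k :: real
  assumes "0 \<le> c" "c \<le> 1"
  shows "((\<lambda>t. k * (if 1 - c \<le> t then 1 else 0)) has_integral k * c) {0..1}"
proof -
  have "((\<lambda>t. if t \<in> {1-c..1} then k else 0) has_integral k * (1 - (1 - c))) {0..1}"
    using step_int[of "1-c" 1 k] assms by simp
  then show ?thesis
    by (subst has_integral_spike_finite_eq[of "{}", where g="\<lambda>t. if t \<in> {1-c..1} then k else 0"]) auto
qed

lemma primal_bound:
  assumes wfin: "wfin A B E P" and f: "feasible A B E y"
    and M: "\<And>U. U \<subseteq> A \<union> B \<Longrightarrow> indep E U \<Longrightarrow> sum r U \<le> M"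
  shows "(\<Sum>v\<in>A \<union> B. r v * y v) \<le> M"
proof -
  have fA: "finite A" and fB: "finite B" and dj: "A \<inter> B = {}" and EAB: "E \<subseteq> A \<times> B"
    using wfin unfolding wfin_def by auto
  have y: "\<forall>v\<in>A \<union> B. 0 \<le> y v \<and> y v \<le> 1" "\<forall>(a,b)\<in>E. y a + y b \<le> 1"
    using f unfolding feasible_iff[OF fA fB dj EAB] by auto
  define g where "g t = (\<Sum>a\<in>A. r a * (if t < y a then 1 else 0)) + (\<Sum>b\<in>B. r b * (if 1 - y b \<le> t then 1 else 0))" for t
  have hA: "((\<lambda>t. \<Sum>a\<in>A. r a * (if t < y a then 1 else 0)) has_integral (\<Sum>a\<in>A. r a * y a)) {0..1}"
    using fA y(1) by (intro has_integral_sum stepA_int) auto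
  have hB: "((\<lambda>t. \<Sum>b\<in>B. r b * (if 1 - y b \<le> t then 1 else 0)) has_integral (\<Sum>b\<in>B. r b * y b)) {0..1}"
    using fB y(1) by (intro has_integral_sum stepB_int) auto
  have hg: "(g has_integral (\<Sum>v\<in>A \<union> B. r v * y v)) {0..1}"
    unfolding g_def using has_integral_add[OF hA hB] fA fB dj by (simp add: sum.union_disjoint)
  have gM: "g t \<le> M" for t
  proof -
    define U where "U = {a\<in>A. t < y a} \<union> {b\<in>B. 1 - y b \<le> t}"
    have "U \<subseteq> A \<union> B" unfolding U_def by auto
    moreover have "indep E U" unfolding indep_def
    proof clarify
      fix a b assume e: "(a,b) \<in> E" "a \<in> U" "b \<in> U"
      have "a \<in> A" "b \<in> B" using e EAB by auto
      then have "t < y a" "1 - y b \<le> t" using e(2,3) dj unfolding U_def by auto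
      then show False using y(2) e(1) by auto
    qed
    ultimately have "sum r U \<le> M" by (rule M)
    moreover have "sum r U = g t"
    proof -
      have "sum r U = sum r {a\<in>A. t < y a} + sum r {b\<in>B. 1 - y b \<le> t}"
        unfolding U_def using fA fB dj by (intro sum.union_disjoint) auto
      also have "sum r {a\<in>A. t < y a} = (\<Sum>a\<in>A. r a * (if t < y a then 1 else 0))"
        using fA by (simp add: sum.inter_filter[symmetric] if_distrib cong: if_cong)
      also have "sum r {b\<in>B. 1 - y b \<le> t} = (\<Sum>b\<in>B. r b * (if 1 - y b \<le> t then 1 else 0))"
        using fB by (simp add: sum.inter_filter[symmetric] if_distrib cong: if_cong)
      finally show ?thesis unfolding g_def .
    qed
    ultimately show ?thesis by simp
  qed
  have "((\<lambda>t. M) has_integral M) {0..1::real}"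
    using has_integral_const_real[of M 0 1] by simp
  then show ?thesis using has_integral_le[OF hg] gM by blast
qed




lemma primal_exists:
  assumes wfin: "wfin A B E P"
  shows "\<exists>y. (\<forall>v\<in>A \<union> B. y v \<in> {0, 1}) \<and> primal_opt A B E P y"
proof -
  have fA: "finite A" and fB: "finite B" using wfin unfolding wfin_def by auto
  define F where "F = {U. U \<subseteq> A \<union> B \<and> indep E U}"
  have "F \<subseteq> Pow (A \<union> B)" unfolding F_def by blast
  then have fF: "finite F" using fA fB by (meson finite_Pow_iff finite_UnI finite_subset)
  have neF: "{} \<in> F" unfolding F_def indep_def by auto
  define M where "M = Max ((\<lambda>U. sum (rvec A B P) U) ` F)"
  have "M \<in> (\<lambda>U. sum (rvec A B P) U) ` F" unfolding M_def using fF neF by (intro Max_in) auto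
  then obtain U0 where U0: "U0 \<in> F" "sum (rvec A B P) U0 = M" by blast
  have Mb: "sum (rvec A B P) U \<le> M" if "U \<subseteq> A \<union> B" "indep E U" for U
  proof -
    have "U \<in> F" unfolding F_def using that by blast
    then have "sum (rvec A B P) U \<in> (\<lambda>U. sum (rvec A B P) U) ` F" by (rule imageI)
    then show ?thesis unfolding M_def using fF by (intro Max_ge) auto
  qed
  define y0 where "y0 = (\<lambda>v. if v \<in> U0 then 1 else (0::real))"
  have f0: "feasible A B E y0" unfolding y0_def using U0(1) unfolding F_def by (intro indicator_feasible[OF wfin]) auto
  have s0: "(\<Sum>v\<in>A \<union> B. rvec A B P v * y0 v) = M"
  proof -
    have "(\<Sum>v\<in>A \<union> B. rvec A B P v * y0 v) = (\<Sum>v\<in>A \<union> B. if v \<in> U0 then rvec A B P v else 0)"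
      unfolding y0_def by (intro sum.cong) auto
    also have "\<dots> = sum (rvec A B P) ((A \<union> B) \<inter> U0)" using fA fB by (simp add: sum.If_cases)
    also have "(A \<union> B) \<inter> U0 = U0" using U0(1) unfolding F_def by auto
    finally show ?thesis using U0(2) by simp
  qed
  have "primal_opt A B E P y0" unfolding primal_opt_def
  proof (intro conjI allI impI)
    show "feasible A B E y0" by (rule f0)
    fix y' assume "feasible A B E y'"
    have "(\<Sum>v\<in>A \<union> B. rvec A B P v * y' v) \<le> M" by (rule primal_bound[OF wfin \<open>feasible A B E y'\<close> Mb])
    then show "(\<Sum>v\<in>A \<union> B. rvec A B P v * y' v) \<le> (\<Sum>v\<in>A \<union> B. rvec A B P v * y0 v)" using s0 by simp
  qed
  moreover have "\<forall>v\<in>A \<union> B. y0 v \<in> {0, 1}" unfolding y0_def by auto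
  ultimately show ?thesis by blast
qed

lemma rvec_nonneg:
  assumes wfin: "wfin A B E P" and v: "v \<in> A \<union> B"
  shows "rvec A B P v \<ge> 0"
proof -
  have Pnn: "\<forall>v\<in>A \<union> B. P v \<ge> 0" using wfin unfolding wfin_def by (auto simp: less_imp_le)
  have "sum P (A \<union> B) \<ge> 0" using Pnn by (intro sum_nonneg) auto
  moreover have "sum P A \<ge> 0" "sum P B \<ge> 0" using Pnn by (auto intro: sum_nonneg)
  moreover have "P v \<ge> 0" using Pnn v by auto
  ultimately show ?thesis unfolding rvec_def by (simp add: divide_nonneg_nonneg mult_nonneg_nonneg)
qed

lemma compact_box:
  fixes S :: "'b \<Rightarrow> real set"
  assumes "\<And>i. compact (S i)"
  shows "compact {z. \<forall>i. z i \<in> S i}"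
proof -
  have "compactin (product_topology (\<lambda>i. euclidean) UNIV) (PiE UNIV S)"
    using assms by (subst compactin_PiE) auto
  moreover have "PiE UNIV S = {z. \<forall>i. z i \<in> S i}" by (auto simp: PiE_UNIV_domain Pi_def)
  ultimately show ?thesis using euclidean_product_topology compactin_euclidean_iff by metis
qed

lemma dual_exists:
  assumes wfin: "wfin A B E P"
  shows "\<exists>z. dual_opt A B E P z"
proof -
  have fA: "finite A" and fB: "finite B" and EAB: "E \<subseteq> A \<times> B" using wfin unfolding wfin_def by auto
  define R where "R = Defs.rows A B E"
  have fE: "finite E" using EAB fA fB finite_subset by blast
  have fR: "finite R" unfolding R_def Defs.rows_def using fE fA fB by auto
  have Mnn: "Mmat row w \<ge> 0" for row w unfolding Mmat_def by (auto split: sum.splits)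
  define z0 where "z0 = (\<lambda>row. if row \<in> R then (case row of Inr v \<Rightarrow> rvec A B P v | Inl e \<Rightarrow> 0) else 0)"
  have z0nn: "z0 row \<ge> 0" for row
    using rvec_nonneg[OF wfin] unfolding z0_def R_def Defs.rows_def by (auto split: sum.splits)
  define C where "C = sum z0 R"
  have z0C: "z0 row \<le> C" for row
  proof (cases "row \<in> R")
    case True then show ?thesis unfolding C_def using fR z0nn by (intro member_le_sum) auto
  next
    case False
    have "C \<ge> 0" unfolding C_def using z0nn by (intro sum_nonneg) auto
    then show ?thesis using False unfolding z0_def by simp
  qed
  define MT where "MT z w = (\<Sum>row\<in>R. Mmat row w * z row)" for z :: "'a row \<Rightarrow> real" and w
  have MTeq: "MTvec A B E z w = MT z w" for z w unfolding MTvec_def MT_def R_def ..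
  have z0f: "rvec A B P w \<le> MT z0 w" if w: "w \<in> A \<union> B" for w
  proof -
    have i: "Inr w \<in> R" using w unfolding R_def Defs.rows_def by auto
    have "Mmat (Inr w) w * z0 (Inr w) \<le> MT z0 w" unfolding MT_def
      using i fR Mnn z0nn by (intro member_le_sum[where f="\<lambda>row. Mmat row w * z0 row"]) (use mult_nonneg_nonneg[OF Mnn z0nn] in auto)
    then show ?thesis using i unfolding z0_def Mmat_def by simp
  qed
  define K1 where "K1 = {z :: 'a row \<Rightarrow> real. \<forall>i. z i \<in> (if i \<in> R then {0..C} else {0})}"
  define K2 where "K2 = (\<Inter>w\<in>A \<union> B. {z :: 'a row \<Rightarrow> real. rvec A B P w \<le> MT z w})"
  have cK1: "compact K1" unfolding K1_def by (intro compact_box) auto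
  have cMT: "continuous_on UNIV (\<lambda>z. MT z w)" for w
    unfolding MT_def by (intro continuous_intros continuous_on_product_coordinates)
  have clK2: "closed K2" unfolding K2_def
    by (intro closed_INT ballI closed_Collect_le cMT continuous_on_const)
  have cK: "compact (K1 \<inter> K2)" using cK1 clK2 by (rule compact_Int_closed)
  have z0out: "z0 i = 0" if "i \<notin> R" for i using that unfolding z0_def by simp
  have "z0 \<in> K1" unfolding K1_def using z0nn z0C z0out by simp
  moreover have "z0 \<in> K2" unfolding K2_def using z0f by blast
  ultimately have z0K: "z0 \<in> K1 \<inter> K2" by blast
  have cobj0: "continuous_on UNIV (\<lambda>z :: 'a row \<Rightarrow> real. sum z R)"
    by (intro continuous_intros continuous_on_product_coordinates)
  have cobj: "continuous_on (K1 \<inter> K2) (\<lambda>z. sum z R)"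
    using cobj0 continuous_on_subset by blast
  obtain zs where zs: "zs \<in> K1 \<inter> K2" "\<forall>z\<in>K1 \<inter> K2. sum zs R \<le> sum z R"
    using continuous_attains_inf[OF cK _ cobj] z0K by blast
  have k1: "\<forall>i. zs i \<in> (if i \<in> R then {0..C} else {0})" using zs(1) unfolding K1_def by blast
  have k2: "\<forall>w\<in>A \<union> B. rvec A B P w \<le> MT zs w" using zs(1) unfolding K2_def by blast
  have k1': "\<forall>i\<in>R. 0 \<le> zs i"
  proof
    fix i assume "i \<in> R" then have "zs i \<in> {0..C}" using k1 by metis
    then show "0 \<le> zs i" by simp
  qed
  have dfz: "dual_feasible A B E P zs"
    unfolding dual_feasible_def MTeq R_def[symmetric] using k1' k2 by blast
  have "dual_opt A B E P zs" unfolding dual_opt_def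
  proof (intro conjI dfz allI impI)
    fix z' assume d': "dual_feasible A B E P z'"
    show "(\<Sum>r\<in>Defs.rows A B E. zs r) \<le> (\<Sum>r\<in>Defs.rows A B E. z' r)"
    proof (cases "sum z' R \<ge> C")
      case True
      have "sum zs R \<le> sum z0 R" using zs(2) z0K by blast
      then show ?thesis using True unfolding C_def R_def by simp
    next
      case False
      define z'' where "z'' = (\<lambda>i. if i \<in> R then z' i else 0)"
      have nn: "\<forall>i\<in>R. z' i \<ge> 0" using d' unfolding dual_feasible_def R_def by auto
      have le: "z' i \<le> C" if "i \<in> R" for i
      proof -
        have "z' i \<le> sum z' R" using that fR nn by (intro member_le_sum) auto
        then show ?thesis using False by simp
      qed
      have eqs: "sum z'' R = sum z' R" unfolding z''_def by simp
      have "MT z'' w = MT z' w" for w unfolding MT_def z''_def by (intro sum.cong) auto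
      then have "z'' \<in> K1 \<inter> K2" using d' nn le unfolding K1_def K2_def dual_feasible_def MTeq z''_def
        by auto
      then have "sum zs R \<le> sum z'' R" using zs(2) by blast
      then have "sum zs R \<le> sum z' R" using eqs by linarith
      then show ?thesis unfolding R_def .
    qed
  qed
  then show ?thesis by blast
qed

lemma LinOpt_exists:
  assumes w: "wfin A B E P" shows "\<exists>Ap Am Bp Bm zl. LinOpt A B E P Ap Am Bp Bm zl"
proof -
  obtain y where y: "\<forall>v\<in>A \<union> B. y v \<in> {0, 1}" "primal_opt A B E P y" using primal_exists[OF w] by blast
  obtain z where z: "dual_opt A B E P z" using dual_exists[OF w] by blast
  have "LinOpt A B E P {v\<in>A. y v = 1} (A - {v\<in>A. y v = 1}) {v\<in>B. y v = 1} (B - {v\<in>B. y v = 1}) z"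
    unfolding LinOpt_def using y z by blast
  then show ?thesis by blast
qed




lemma correct:
  assumes "OptProb A B E P q z" "wfin A B E P"
  shows "is_unique_minimizer A B E P q \<and> InvA A B E P q \<and> InvB A B E P q"
  using assms
proof (induction rule: OptProb.induct)
  case (split A B E P Ap Am Bp Bm zl q' z' q'' z'')
  have w: "wfin Ap Bm (E \<inter> (Ap \<times> Bm)) P" "wfin Am Bp (E \<inter> (Am \<times> Bp)) P"
    using wf_sub[OF split.prems split.hyps(1)] by auto
  show ?case
    by (rule split_case[OF split.prems split.hyps(1) split.hyps(2) refl refl split.IH(1)[OF w(1)] split.IH(2)[OF w(2)] refl])
next
  case (stop A B E P Ap Am Bp Bm zl)
  show ?case by (rule stop_case[OF stop.prems stop.hyps(1) stop.hyps(2) refl])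
qed

lemma terminates:
  assumes "finite A" "finite B" "\<forall>v\<in>A \<union> B. P v > 0"
  shows "OptProb_terminates P A B E"
proof -
  have "\<forall>A B E. finite A \<longrightarrow> finite B \<longrightarrow> (\<forall>v\<in>A \<union> B. P v > 0) \<longrightarrow> card A + card B = n \<longrightarrow> (A, B, E) \<in> Wellfounded.acc {(x', x). OptProb_call P x' x}" for n
  proof (induction n rule: less_induct)
    case (less n)
    show ?case
    proof (intro allI impI)
      fix A B :: "'a set" and E assume fA: "finite A" and fB: "finite B" and Pp: "\<forall>v\<in>A \<union> B. P v > 0" and n: "card A + card B = n"
      show "(A, B, E) \<in> Wellfounded.acc {(x', x). OptProb_call P x' x}"
      proof (rule accI)
        fix x' assume "(x', (A, B, E)) \<in> {(x', x). OptProb_call P x' x}"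
        then obtain Ap Am Bp Bm zl where L: "LinOpt A B E P Ap Am Bp Bm zl"
          and sp: "sum P Ap * sum P Bp > sum P Am * sum P Bm"
          and x: "x' = (Ap, Bm, E \<inter> (Ap \<times> Bm)) \<or> x' = (Am, Bp, E \<inter> (Am \<times> Bp))"
          unfolding OptProb_call_def by auto
        have "Ap \<subseteq> A \<and> Am = A - Ap \<and> Bp \<subseteq> B \<and> Bm = B - Bp" using L unfolding LinOpt_def by auto
        then have sub: "Ap \<subseteq> A" "Bp \<subseteq> B" and Am: "Am = A - Ap" and Bm: "Bm = B - Bp" by auto
        have "sum P Am * sum P Bm \<ge> 0" proof -
          have Pnn: "\<forall>v\<in>A \<union> B. P v \<ge> 0" using Pp by (simp add: less_imp_le)
          show ?thesis using Pnn unfolding Am Bm by (auto intro!: sum_nonneg mult_nonneg_nonneg)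
        qed
        then have "sum P Ap \<noteq> 0" "sum P Bp \<noteq> 0" using sp by auto
        then have ne: "Ap \<noteq> {}" "Bp \<noteq> {}" by auto
        have c1: "card Bm < card B" unfolding Bm using ne sub fB
          by (metis Diff_subset card_seteq finite_Diff linorder_not_less Diff_eq_empty_iff Diff_Diff_Int inf.absorb_iff2 subset_empty)
        have c2: "card Am < card A" unfolding Am using ne sub fA
          by (metis Diff_subset card_seteq finite_Diff linorder_not_less Diff_eq_empty_iff Diff_Diff_Int inf.absorb_iff2 subset_empty)
        have c3: "card Ap \<le> card A" "card Bp \<le> card B" using sub fA fB by (auto intro: card_mono)
        show "x' \<in> Wellfounded.acc {(x', x). OptProb_call P x' x}"
          using x
        proof
          assume x': "x' = (Ap, Bm, E \<inter> (Ap \<times> Bm))"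
          have "card Ap + card Bm < n" using c1 c3 n by linarith
          moreover have "finite Ap" "finite Bm" "\<forall>v\<in>Ap \<union> Bm. P v > 0" using sub fA fB Bm Pp by (auto intro: finite_subset)
          ultimately show ?thesis using less.IH x' by blast
        next
          assume x': "x' = (Am, Bp, E \<inter> (Am \<times> Bp))"
          have "card Am + card Bp < n" using c2 c3 n by linarith
          moreover have "finite Am" "finite Bp" "\<forall>v\<in>Am \<union> Bp. P v > 0" using sub fA fB Am Pp by (auto intro: finite_subset)
          ultimately show ?thesis using less.IH x' by blast
        qed
      qed
    qed
  qed
  then show ?thesis unfolding OptProb_terminates_def using assms by blast
qed

lemma exists:
  assumes "wfin A B E P"
  shows "\<exists>q z. OptProb A B E P q z"
proof -
  have "\<forall>A B E. wfin A B E P \<longrightarrow> card A + card B = n \<longrightarrow> (\<exists>q z. OptProb A B E P q z)" for n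
  proof (induction n rule: less_induct)
    case (less n)
    show ?case
    proof (intro allI impI)
      fix A B :: "'a set" and E assume w: "wfin A B E P" and n: "card A + card B = n"
      obtain Ap Am Bp Bm zl where L: "LinOpt A B E P Ap Am Bp Bm zl" using LinOpt_exists[OF w] by blast
      show "\<exists>q z. OptProb A B E P q z"
      proof (cases "sum P Ap * sum P Bp > sum P Am * sum P Bm")
        case sp: True
        note LF = LinOpt_facts[OF w L]
        have fA: "finite A" "finite B" using w unfolding wfin_def by auto
        have Pp: "\<forall>v\<in>A \<union> B. P v > 0" using w unfolding wfin_def by auto
        have "sum P Am * sum P Bm \<ge> 0" proof -
          have Pnn: "\<forall>v\<in>A \<union> B. P v \<ge> 0" using Pp by (simp add: less_imp_le)
          show ?thesis using Pnn unfolding LF(2,4) by (auto intro!: sum_nonneg mult_nonneg_nonneg)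
        qed
        then have "sum P Ap \<noteq> 0" "sum P Bp \<noteq> 0" using sp by auto
        then have ne: "Ap \<noteq> {}" "Bp \<noteq> {}" by auto
        have c1: "card Bm < card B" unfolding LF(4) using ne LF(3) fA
          by (metis Diff_subset card_seteq finite_Diff linorder_not_less Diff_eq_empty_iff Diff_Diff_Int inf.absorb_iff2 subset_empty)
        have c2: "card Am < card A" unfolding LF(2) using ne LF(1) fA
          by (metis Diff_subset card_seteq finite_Diff linorder_not_less Diff_eq_empty_iff Diff_Diff_Int inf.absorb_iff2 subset_empty)
        have c3: "card Ap \<le> card A" "card Bp \<le> card B" using LF(1,3) fA by (auto intro: card_mono)
        obtain q' z' where 1: "OptProb Ap Bm (E \<inter> (Ap \<times> Bm)) P q' z'"
          using less.IH[of "card Ap + card Bm"] wf_sub(1)[OF w L] c1 c3 n by fastforce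
        obtain q'' z'' where 2: "OptProb Am Bp (E \<inter> (Am \<times> Bp)) P q'' z''"
          using less.IH[of "card Am + card Bp"] wf_sub(2)[OF w L] c2 c3 n by fastforce
        show ?thesis using OptProb.split[OF L sp 1 2] by blast
      next
        case False
        show ?thesis using OptProb.stop[OF L False] by blast
      qed
    qed
  qed
  then show ?thesis using assms by blast
qed

theorem theorem3:
  fixes A B :: "'a set" and E :: "('a \<times> 'a) set" and P :: "'a \<Rightarrow> real"
  assumes "finite A" and "finite B" and "A \<inter> B = {}"
    and "E \<subseteq> A \<times> B"
    and "\<forall>v\<in>A \<union> B. P v > 0"
  shows "OptProb_terminates P A B E \<and> (\<exists>q z. OptProb A B E P q z) \<and>
         (\<forall>q z. OptProb A B E P q z \<longrightarrow> is_unique_minimizer A B E P q)"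
proof -
  have w: "wfin A B E P" unfolding wfin_def using assms by auto
  show ?thesis using terminates[OF assms(1,2,5)] exists[OF w] correct w by blast
qed


end
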